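(* Let $f:\{-1,1\}^k\to\{0,1\}$, $\delta\in(0,1)$, and let $\Lambda^*$ be a probability measure on $\mathcal{C}^*_\delta(f)$ such that for every $t\in[k]$ the signed measure $\mathbb{E}_{|S|=t}\mathbb{E}_{\pi:S\to S}\mathbb{E}_{b\in\{-1,1\}^{|S|}}[(\prod_{i\in S}b_i)\hat f(S)\Lambda^*_{S,\pi,b}]$ is identically zero. For every $\varepsilon>0$ there exists a sufficiently large constant $\Delta(\varepsilon)$ such that, with high probability (as $n\to\infty$) over the random instance $\Phi$ of MAX k-CSP$(f)$ generated as described below with $m=\Delta(\varepsilon)n$ constraints, every assignment $\psi$ to $\Phi$ satisfies $\mathrm{sat}(\psi)\in[\rho(f)-\varepsilon,\rho(f)+\varepsilon]$.
   Context: $\rho(f)=|f^{-1}(1)|/2^k$, $\hat f(S)$ the Fourier coefficients of $f$. $\mathcal{C}^*(f)\subseteq\mathbb{R}^k$ is the set of first-moment vectors $(\mathbb{E}_\nu x_1,\dots,\mathbb{E}_\nu x_k)$ of distributions $\nu$ on $f^{-1}(1)$, and $\mathcal{C}^*_\delta(f)=\{(1-\delta)\zeta:\zeta\in\mathcal{C}^*(f)\}$. $\Lambda^*_{S,\pi,b}$ is the law of the vector obtained from $\zeta\sim\Lambda^*$ by restricting to coordinates $S$, permuting by $\pi$ and multiplying coordinatewise by $b$; $S$ (of size $t$), $\pi$, $b$ uniform. Random instance: let $s=\lceil1/\varepsilon\rceil$; partition $[0,1]$ into $I_0=\{0\}$ and contiguous equal-length intervals $I_1,\dots,I_s$ partitioning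 $(0,1]$, each open at the left endpoint and closed at the right. For each $i\in\{0,\dots,s\}$ there is a layer $X_i$ of $n$ Boolean variables. One constraint is generated by: sample $\zeta\sim\Lambda^*$; for each $j\in[k]$ let $i_j$ be the index of the interval containing $|\zeta(j)|$ and pick a uniformly random variable from $X_{i_j}$; negate it if $\zeta(j)<0$, and with probability $1/2$ if $\zeta(j)=0$; impose $f$ on these $k$ literals. This is repeated independently $m$ times. $\mathrm{sat}(\psi)$ is the fraction of constraints satisfied by the $\pm1$ assignment $\psi$. *)

theory Defs
  imports "HOL-Probability.Probability" "HOL-Combinatorics.Permutations"
begin

(* Points of {-1,1}^k: functions on {..<k} (extensional, undefined outside). *)
definition cube :: "nat \<Rightarrow> (nat \<Rightarrow> real) set" where
  "cube k = PiE {..<k} (\<lambda>_. {-1, 1})"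

(* f : {-1,1}^k -> {0,1} is encoded as a predicate (True = 1). *)
definition rho :: "nat \<Rightarrow> ((nat \<Rightarrow> real) \<Rightarrow> bool) \<Rightarrow> real" where
  "rho k f = real (card {x \<in> cube k. f x}) / 2 ^ k"

definition fhat :: "nat \<Rightarrow> ((nat \<Rightarrow> real) \<Rightarrow> bool) \<Rightarrow> nat set \<Rightarrow> real" where
  "fhat k f S = (\<Sum>x\<in>cube k. of_bool (f x) * (\<Prod>i\<in>S. x i)) / 2 ^ k"

definition Cstar :: "nat \<Rightarrow> ((nat \<Rightarrow> real) \<Rightarrow> bool) \<Rightarrow> (nat \<Rightarrow> real) set" where
  "Cstar k f = {\<zeta> \<in> extensional {..<k}. \<exists>\<nu> :: (nat \<Rightarrow> real) pmf.
      set_pmf \<nu> \<subseteq> {x \<in> cube k. f x} \<and>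
      (\<forall>j<k. \<zeta> j = measure_pmf.expectation \<nu> (\<lambda>x. x j))}"

definition Cstar_delta :: "nat \<Rightarrow> ((nat \<Rightarrow> real) \<Rightarrow> bool) \<Rightarrow> real \<Rightarrow> (nat \<Rightarrow> real) set" where
  "Cstar_delta k f \<delta> = (\<lambda>\<zeta>. \<lambda>j\<in>{..<k}. (1 - \<delta>) * \<zeta> j) ` Cstar k f"

(* Lambda^*_{S,pi,b}: restrict zeta to S, permute by pi, multiply by b; the result
   (indexed by S) is identified with a vector in R^t, t = |S|, via the increasing
   enumeration of S. *)
definition proj_vec :: "nat set \<Rightarrow> (nat \<Rightarrow> nat) \<Rightarrow> (nat \<Rightarrow> real) \<Rightarrow> (nat \<Rightarrow> real) \<Rightarrow> (nat \<Rightarrow> real)" where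
  "proj_vec S \<pi> b \<zeta> = (\<lambda>j\<in>{..<card S}.
      let s = sorted_list_of_set S ! j in b s * \<zeta> (\<pi> s))"

definition signed_avg :: "nat \<Rightarrow> ((nat \<Rightarrow> real) \<Rightarrow> bool) \<Rightarrow> (nat \<Rightarrow> real) measure
     \<Rightarrow> nat \<Rightarrow> (nat \<Rightarrow> real) set \<Rightarrow> real" where
  "signed_avg k f \<Lambda> t A =
     (\<Sum>S\<in>{S. S \<subseteq> {..<k} \<and> card S = t}.
       (\<Sum>\<pi>\<in>{\<pi>. \<pi> permutes S}.
         (\<Sum>b\<in>PiE S (\<lambda>_. {-1, 1}).
            (\<Prod>i\<in>S. b i) * fhat k f S *
            measure \<Lambda> {\<zeta> \<in> space \<Lambda>. proj_vec S \<pi> b \<zeta> \<in> A}) / 2 ^ t)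
       / fact t) / real (k choose t)"

definition interval :: "nat \<Rightarrow> nat \<Rightarrow> real set" where
  "interval s i = (if i = 0 then {0} else {(real i - 1) / real s <.. real i / real s})"

definition layer :: "nat \<Rightarrow> real \<Rightarrow> nat" where
  "layer s a = (THE i. i \<le> s \<and> a \<in> interval s i)"

(* A literal is (layer index, variable index within layer, negated?).
   Probability that coordinate value z produces literal c, with n variables per layer. *)
definition lit_prob :: "nat \<Rightarrow> nat \<Rightarrow> real \<Rightarrow> nat \<times> nat \<times> bool \<Rightarrow> real" where
  "lit_prob n s z c = (case c of (i, v, neg) \<Rightarrow>
      of_bool (i = layer s \<bar>z\<bar>) * (if v < n then 1 / real n else 0) *
      (if z < 0 then of_bool neg else if z > 0 then of_bool (\<not> neg) else 1 / 2))"

definition constraints :: "nat \<Rightarrow> nat \<Rightarrow> nat \<Rightarrow> (nat \<Rightarrow> nat \<times> nat \<times> bool) set" where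
  "constraints k n s = PiE {..<k} (\<lambda>_. {..s} \<times> {..<n} \<times> UNIV)"

definition constraint_prob :: "nat \<Rightarrow> (nat \<Rightarrow> real) measure \<Rightarrow> nat \<Rightarrow> nat
     \<Rightarrow> (nat \<Rightarrow> nat \<times> nat \<times> bool) \<Rightarrow> real" where
  "constraint_prob k \<Lambda> n s c = (\<integral>\<zeta>. (\<Prod>j<k. lit_prob n s (\<zeta> j) (c j)) \<partial>\<Lambda>)"

(* constraint c satisfied by the \<plusminus>1 assignment psi (variables are pairs (layer, index)) *)
definition satisfied :: "nat \<Rightarrow> ((nat \<Rightarrow> real) \<Rightarrow> bool) \<Rightarrow> (nat \<times> nat \<Rightarrow> real)
     \<Rightarrow> (nat \<Rightarrow> nat \<times> nat \<times> bool) \<Rightarrow> bool" where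
  "satisfied k f \<psi> c = f (\<lambda>j\<in>{..<k}. case c j of (i, v, neg) \<Rightarrow>
      (if neg then -1 else 1) * \<psi> (i, v))"

definition sat :: "nat \<Rightarrow> ((nat \<Rightarrow> real) \<Rightarrow> bool) \<Rightarrow> (nat \<Rightarrow> nat \<times> nat \<times> bool) list
     \<Rightarrow> (nat \<times> nat \<Rightarrow> real) \<Rightarrow> real" where
  "sat k f \<Phi> \<psi> = (\<Sum>c\<leftarrow>\<Phi>. of_bool (satisfied k f \<psi> c)) / real (length \<Phi>)"

definition instance_prob :: "nat \<Rightarrow> (nat \<Rightarrow> real) measure \<Rightarrow> nat \<Rightarrow> nat \<Rightarrow> nat
     \<Rightarrow> ((nat \<Rightarrow> nat \<times> nat \<times> bool) list \<Rightarrow> bool) \<Rightarrow> real" where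
  "instance_prob k \<Lambda> n s m E =
     (\<Sum>\<Phi>\<in>{\<Phi>. set \<Phi> \<subseteq> constraints k n s \<and> length \<Phi> = m}.
        of_bool (E \<Phi>) * (\<Prod>c\<leftarrow>\<Phi>. constraint_prob k \<Lambda> n s c))"

end

theory Submission
  imports Defs
begin


lemma lists_Suc_eq:
  "{\<Phi>. set \<Phi> \<subseteq> D \<and> length \<Phi> = Suc m} = (\<lambda>(c,\<Phi>). c # \<Phi>) ` (D \<times> {\<Phi>. set \<Phi> \<subseteq> D \<and> length \<Phi> = m})"
proof (rule set_eqI, rule iffI)
  fix x assume "x \<in> {\<Phi>. set \<Phi> \<subseteq> D \<and> length \<Phi> = Suc m}"
  then obtain c xs where "x = c # xs" "set (c#xs) \<subseteq> D" "length xs = m"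
    by (cases x) auto
  then show "x \<in> (\<lambda>(c,\<Phi>). c # \<Phi>) ` (D \<times> {\<Phi>. set \<Phi> \<subseteq> D \<and> length \<Phi> = m})"
    by (auto intro!: image_eqI[where x="(c,xs)"])
qed auto

lemma sum_lists_prod:
  assumes "finite D"
  shows "(\<Sum>\<Phi>\<in>{\<Phi>. set \<Phi> \<subseteq> D \<and> length \<Phi> = m}. \<Prod>c\<leftarrow>\<Phi>. g c) = (\<Sum>c\<in>D. g c :: real) ^ m"
proof (induction m)
  case 0
  have "{\<Phi>. set \<Phi> \<subseteq> D \<and> length \<Phi> = 0} = {[]}" by auto
  then show ?case by simp
next
  case (Suc m)
  have inj: "inj_on (\<lambda>(c,\<Phi>). c # \<Phi>) (D \<times> {\<Phi>. set \<Phi> \<subseteq> D \<and> length \<Phi> = m})"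
    by (auto simp: inj_on_def)
  have fin: "finite {\<Phi>. set \<Phi> \<subseteq> D \<and> length \<Phi> = m}"
    using finite_lists_length_eq[OF assms] by simp
  have "(\<Sum>\<Phi>\<in>{\<Phi>. set \<Phi> \<subseteq> D \<and> length \<Phi> = Suc m}. \<Prod>c\<leftarrow>\<Phi>. g c)
     = (\<Sum>(c,\<Phi>)\<in>D \<times> {\<Phi>. set \<Phi> \<subseteq> D \<and> length \<Phi> = m}. g c * (\<Prod>c\<leftarrow>\<Phi>. g c))"
    unfolding lists_Suc_eq by (subst sum.reindex[OF inj]) (simp add: case_prod_beta)
  also have "\<dots> = (\<Sum>c\<in>D. g c * (\<Sum>\<Phi>\<in>{\<Phi>. set \<Phi> \<subseteq> D \<and> length \<Phi> = m}. \<Prod>c\<leftarrow>\<Phi>. g c))"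
    by (subst sum.cartesian_product[symmetric]) (simp add: sum_distrib_left)
  also have "\<dots> = (\<Sum>c\<in>D. g c) ^ Suc m"
    by (simp add: Suc sum_distrib_right)
  finally show ?case .
qed

lemma hoeff_fin:
  fixes p X :: "'a \<Rightarrow> real"
  assumes fin: "finite D" and pnn: "\<And>c. c \<in> D \<Longrightarrow> p c \<ge> 0" and p1: "(\<Sum>c\<in>D. p c) = 1"
    and X: "\<And>c. c \<in> D \<Longrightarrow> X c \<in> {0..1}" and l: "l > 0"
  shows "(\<Sum>c\<in>D. p c * exp (l * (X c - (\<Sum>c\<in>D. p c * X c)))) \<le> exp (l\<^sup>2 / 8)"
proof -
  define q where "q = (\<lambda>c. if c \<in> D then p c else 0)"
  have qnn: "\<And>c. 0 \<le> q c" using pnn by (auto simp: q_def)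
  have qint: "(\<integral>\<^sup>+x. ennreal (q x) \<partial>count_space UNIV) = 1"
  proof -
    have "(\<integral>\<^sup>+x. ennreal (q x) \<partial>count_space UNIV) = (\<integral>\<^sup>+x. ennreal (q x) * indicator D x \<partial>count_space UNIV)"
      by (intro nn_integral_cong) (auto simp: q_def split: split_indicator)
    also have "\<dots> = (\<Sum>x\<in>D. ennreal (q x))"
      using fin by (subst nn_integral_indicator_finite) auto
    also have "\<dots> = ennreal (\<Sum>x\<in>D. q x)" using qnn by (simp add: sum_ennreal)
    also have "(\<Sum>x\<in>D. q x) = 1" using p1 by (simp add: q_def)
    finally show ?thesis by simp
  qed
  define P where "P = embed_pmf q"
  have pmfP: "pmf P x = q x" for x unfolding P_def by (rule pmf_embed_pmf[OF qnn qint])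
  have setP: "set_pmf P \<subseteq> D" using pmfP by (auto simp: set_pmf_eq q_def)
  interpret ib: interval_bounded_random_variable "measure_pmf P" X 0 1
    by unfold_locales (use setP X in \<open>auto simp: AE_measure_pmf_iff\<close>)
  have E: "measure_pmf.expectation P X = (\<Sum>c\<in>D. p c * X c)"
    by (subst integral_measure_pmf_real[OF fin]) (use setP in \<open>auto simp: pmfP q_def mult.commute\<close>)
  have "(\<integral>\<^sup>+x. ennreal (exp (l * (X x - measure_pmf.expectation P X))) \<partial>measure_pmf P) \<le> ennreal (exp (l\<^sup>2 * (1 - 0)\<^sup>2 / 8))"
    by (rule ib.Hoeffdings_lemma_nn_integral[OF l])
  also have "(\<integral>\<^sup>+x. ennreal (exp (l * (X x - measure_pmf.expectation P X))) \<partial>measure_pmf P)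
      = (\<Sum>x\<in>D. ennreal (exp (l * (X x - measure_pmf.expectation P X))) * pmf P x)"
    by (rule nn_integral_measure_pmf_support[OF fin]) (use setP in auto)
  also have "\<dots> = ennreal (\<Sum>c\<in>D. p c * exp (l * (X c - (\<Sum>c\<in>D. p c * X c))))"
    by (subst sum_ennreal[symmetric]) (auto simp: E pmfP q_def pnn ennreal_mult'' mult.commute intro!: sum.cong)
  finally show ?thesis
    by (subst (asm) ennreal_le_iff) auto
qed


lemma exp_sum_list: "exp (\<Sum>c\<leftarrow>\<Phi>. (g c::real)) = (\<Prod>c\<leftarrow>\<Phi>. exp (g c))"
proof (induction \<Phi>)
  case (Cons a \<Phi>)
  have "exp (g a + (\<Sum>c\<leftarrow>\<Phi>. g c)) = exp (g a) * exp (\<Sum>c\<leftarrow>\<Phi>. g c)" by (simp add: mult_exp_exp)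
  then show ?case using Cons.IH by simp
qed simp

lemma sum_list_diff_const: "(\<Sum>c\<leftarrow>\<Phi>. g c - a) = (\<Sum>c\<leftarrow>\<Phi>. g c) - real (length \<Phi>) * (a::real)"
  by (induction \<Phi>) (auto simp: algebra_simps)

lemma prod_list_mult: "(\<Prod>c\<leftarrow>\<Phi>. g c * h c) = (\<Prod>c\<leftarrow>\<Phi>. g c) * (\<Prod>c\<leftarrow>\<Phi>. (h c::real))"
  by (induction \<Phi>) (auto simp: algebra_simps)

lemma tail_bound:
  fixes p X :: "'a \<Rightarrow> real"
  assumes fin: "finite D" and pnn: "\<And>c. c \<in> D \<Longrightarrow> p c \<ge> 0" and p1: "(\<Sum>c\<in>D. p c) = 1"
    and X: "\<And>c. c \<in> D \<Longrightarrow> X c \<in> {0..1}" and e: "e > 0"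
  shows "(\<Sum>\<Phi>\<in>{\<Phi>. set \<Phi> \<subseteq> D \<and> length \<Phi> = m}.
           of_bool ((\<Sum>c\<leftarrow>\<Phi>. X c) \<ge> real m * ((\<Sum>c\<in>D. p c * X c) + e)) * (\<Prod>c\<leftarrow>\<Phi>. p c))
         \<le> exp (- 2 * real m * e\<^sup>2)"
proof -
  define \<mu> where "\<mu> = (\<Sum>c\<in>D. p c * X c)"
  define l where "l = 4 * e"
  have l: "l > 0" using e by (simp add: l_def)
  let ?L = "{\<Phi>. set \<Phi> \<subseteq> D \<and> length \<Phi> = m}"
  have "(\<Sum>\<Phi>\<in>?L. of_bool ((\<Sum>c\<leftarrow>\<Phi>. X c) \<ge> real m * (\<mu> + e)) * (\<Prod>c\<leftarrow>\<Phi>. p c))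
      \<le> (\<Sum>\<Phi>\<in>?L. exp (- l * real m * e) * (\<Prod>c\<leftarrow>\<Phi>. p c * exp (l * (X c - \<mu>))))"
  proof (rule sum_mono)
    fix \<Phi> assume \<Phi>: "\<Phi> \<in> ?L"
    have pp: "(\<Prod>c\<leftarrow>\<Phi>. p c) \<ge> 0" using \<Phi> pnn by (intro prod_list_nonneg) auto
    have eq: "exp (- l * real m * e) * (\<Prod>c\<leftarrow>\<Phi>. p c * exp (l * (X c - \<mu>)))
        = (\<Prod>c\<leftarrow>\<Phi>. p c) * exp (l * ((\<Sum>c\<leftarrow>\<Phi>. X c) - real m * (\<mu> + e)))"
    proof -
      have "(\<Prod>c\<leftarrow>\<Phi>. exp (l * (X c - \<mu>))) = exp (\<Sum>c\<leftarrow>\<Phi>. l * X c - l * \<mu>)"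
        by (simp add: exp_sum_list algebra_simps)
      also have "(\<Sum>c\<leftarrow>\<Phi>. l * X c - l * \<mu>) = l * (\<Sum>c\<leftarrow>\<Phi>. X c) - real m * (l * \<mu>)"
        using \<Phi> by (simp add: sum_list_diff_const sum_list_const_mult)
      finally have "(\<Prod>c\<leftarrow>\<Phi>. exp (l * (X c - \<mu>))) = exp (l * (\<Sum>c\<leftarrow>\<Phi>. X c) - real m * (l * \<mu>))" .
      moreover have "exp (- l * real m * e) * exp (l * (\<Sum>c\<leftarrow>\<Phi>. X c) - real m * (l * \<mu>))
          = exp (l * ((\<Sum>c\<leftarrow>\<Phi>. X c) - real m * (\<mu> + e)))"
        unfolding mult_exp_exp by (rule arg_cong[where f=exp]) (simp add: algebra_simps)
      ultimately show ?thesis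
        by (simp add: prod_list_mult)
    qed
    have "of_bool ((\<Sum>c\<leftarrow>\<Phi>. X c) \<ge> real m * (\<mu> + e)) \<le> exp (l * ((\<Sum>c\<leftarrow>\<Phi>. X c) - real m * (\<mu> + e)))"
    proof (cases "(\<Sum>c\<leftarrow>\<Phi>. X c) \<ge> real m * (\<mu> + e)")
      case True
      then have "0 \<le> l * ((\<Sum>c\<leftarrow>\<Phi>. X c) - real m * (\<mu> + e))" using l by simp
      then show ?thesis using True by simp
    qed simp
    then show "of_bool ((\<Sum>c\<leftarrow>\<Phi>. X c) \<ge> real m * (\<mu> + e)) * (\<Prod>c\<leftarrow>\<Phi>. p c)
      \<le> exp (- l * real m * e) * (\<Prod>c\<leftarrow>\<Phi>. p c * exp (l * (X c - \<mu>)))"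
      unfolding eq using pp by (simp add: mult.commute mult_left_mono)
  qed
  also have "\<dots> = exp (- l * real m * e) * (\<Sum>c\<in>D. p c * exp (l * (X c - \<mu>))) ^ m"
    by (simp add: sum_distrib_left[symmetric] sum_lists_prod[OF fin])
  also have "\<dots> \<le> exp (- l * real m * e) * exp (l\<^sup>2 / 8) ^ m"
    apply (intro mult_left_mono power_mono)
    using hoeff_fin[OF fin pnn p1 X l] pnn by (auto simp: \<mu>_def intro!: sum_nonneg)
  also have "\<dots> = exp (- 2 * real m * e\<^sup>2)"
    by (simp add: exp_of_nat_mult[symmetric] mult_exp_exp l_def power2_eq_square algebra_simps)
  finally show ?thesis by (simp add: \<mu>_def)
qed


lemma layer_iff:
  assumes s: "s > 0" and a: "0 \<le> a" "a \<le> 1"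
  shows "(i \<le> s \<and> a \<in> interval s i) \<longleftrightarrow> i = nat \<lceil>a * real s\<rceil>"
proof (cases "a = 0")
  case True
  have "i \<le> s \<and> a \<in> interval s i \<longleftrightarrow> i = 0"
  proof
    assume h: "i \<le> s \<and> a \<in> interval s i"
    show "i = 0"
    proof (rule ccontr)
      assume "i \<noteq> 0"
      then have "(real i - 1) / real s < 0" using h True by (simp add: interval_def)
      moreover have "(real i - 1) / real s \<ge> 0" using \<open>i \<noteq> 0\<close> s by simp
      ultimately show False by simp
    qed
  qed (use True in \<open>simp add: interval_def\<close>)
  then show ?thesis using True by simp
next
  case False
  with a have a0: "a > 0" by simp
  have as0: "a * real s > 0" using a0 s by simp
  have c: "\<lceil>a * real s\<rceil> \<ge> 1" using as0 by linarith
  have "a * real s \<le> 1 * real s" by (rule mult_right_mono) (use a in auto)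
  then have cs: "\<lceil>a * real s\<rceil> \<le> int s" by linarith
  show ?thesis
  proof
    assume h: "i \<le> s \<and> a \<in> interval s i"
    then have "i \<noteq> 0" using a0 by (auto simp: interval_def split: if_splits)
    with h have h1: "(real i - 1) / real s < a" "a \<le> real i / real s" by (auto simp: interval_def)
    have "real i - 1 < a * real s" using h1(1) s by (simp add: divide_less_eq)
    moreover have "a * real s \<le> real i" using h1(2) s by (simp add: le_divide_eq)
    ultimately have "\<lceil>a * real s\<rceil> = int i" by (intro ceiling_unique) auto
    then show "i = nat \<lceil>a * real s\<rceil>" by simp
  next
    assume h: "i = nat \<lceil>a * real s\<rceil>"
    then have ii: "int i = \<lceil>a * real s\<rceil>" using c by simp
    have "i \<noteq> 0" using ii c by linarith
    moreover have "i \<le> s" using ii cs by simp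
    moreover have "real i - 1 < a * real s"
      using ii ceiling_correct[of "a * real s"] by linarith
    moreover have "a * real s \<le> real i"
      using ii ceiling_correct[of "a * real s"] by linarith
    ultimately show "i \<le> s \<and> a \<in> interval s i" using s
      by (simp add: interval_def divide_less_eq le_divide_eq)
  qed
qed

lemma layer_in:
  assumes s: "s > 0" and a: "0 \<le> a" "a \<le> 1"
  shows "layer s a = nat \<lceil>a * real s\<rceil>" "layer s a \<le> s" "a \<in> interval s (layer s a)"
proof -
  show l: "layer s a = nat \<lceil>a * real s\<rceil>"
  proof -
    have "(\<lambda>i. i \<le> s \<and> a \<in> interval s i) = (\<lambda>i. i = nat \<lceil>a * real s\<rceil>)"
      by (rule ext) (rule layer_iff[OF assms])
    then show ?thesis unfolding layer_def by simp
  qed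
  have "nat \<lceil>a * real s\<rceil> \<le> s \<and> a \<in> interval s (nat \<lceil>a * real s\<rceil>)"
    using layer_iff[OF assms] by blast
  then show "layer s a \<le> s" "a \<in> interval s (layer s a)" using l by auto
qed

lemma layer_out:
  assumes "\<not> (0 \<le> a \<and> a \<le> (1::real))"
  shows "layer s a = (THE i::nat. False)"
proof -
  have "\<And>i. \<not> (i \<le> s \<and> a \<in> interval s i)"
  proof
    fix i assume h: "i \<le> s \<and> a \<in> interval s i"
    show False
    proof (cases "i = 0")
      case True then show False using h assms by (simp add: interval_def)
    next
      case False
      then have "(real i - 1) / real s < a" "a \<le> real i / real s" using h by (simp_all add: interval_def)
      moreover have "(real i - 1) / real s \<ge> 0" using False by simp
      moreover have "real i / real s \<le> 1" using h by (cases "s = 0") (simp_all add: divide_le_eq)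
      ultimately show False using assms by linarith
    qed
  qed
  then have "(\<lambda>i. i \<le> s \<and> a \<in> interval s i) = (\<lambda>i. False)" by auto
  then show ?thesis unfolding layer_def by simp
qed

lemma layer_alt:
  assumes "s > 0"
  shows "layer s = (\<lambda>a. if 0 \<le> a \<and> a \<le> 1 then nat \<lceil>a * real s\<rceil> else (THE i::nat. False))"
  using layer_in(1)[OF assms] layer_out by auto

lemma layer_meas[measurable]:
  assumes "s > 0"
  shows "layer s \<in> measurable borel (count_space UNIV)"
  unfolding layer_alt[OF assms] by measurable


definition mu :: "nat \<Rightarrow> (nat \<times> nat \<Rightarrow> real) \<Rightarrow> nat \<Rightarrow> real" where
  "mu n \<psi> i = (\<Sum>v<n. \<psi> (i, v)) / real n"

definition mfun :: "nat \<Rightarrow> nat \<Rightarrow> (nat \<times> nat \<Rightarrow> real) \<Rightarrow> real \<Rightarrow> real" where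
  "mfun n s \<psi> z = sgn z * mu n \<psi> (layer s \<bar>z\<bar>)"

definition litv :: "(nat \<times> nat \<Rightarrow> real) \<Rightarrow> nat \<times> nat \<times> bool \<Rightarrow> real" where
  "litv \<psi> l = (case l of (i, v, neg) \<Rightarrow> (if neg then -1 else 1) * \<psi> (i, v))"

lemma sum_lits:
  fixes G :: "nat \<times> nat \<times> bool \<Rightarrow> real"
  shows "(\<Sum>l\<in>{..s}\<times>{..<n}\<times>UNIV. G l) = (\<Sum>i\<le>s. \<Sum>v<n. G (i, v, True) + G (i, v, False))"
proof -
  have "(\<Sum>l\<in>{..s}\<times>{..<n}\<times>UNIV. G l) = (\<Sum>i\<le>s. \<Sum>vb\<in>{..<n}\<times>UNIV. G (i, vb))"
    by (subst sum.cartesian_product) (simp add: case_prod_beta)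
  also have "\<dots> = (\<Sum>i\<le>s. \<Sum>v<n. \<Sum>b\<in>UNIV. G (i, v, b))"
    by (intro sum.cong refl, subst sum.cartesian_product) (simp add: case_prod_beta)
  also have "\<dots> = (\<Sum>i\<le>s. \<Sum>v<n. G (i, v, True) + G (i, v, False))"
    by (simp add: UNIV_bool add.commute)
  finally show ?thesis .
qed

lemma lit_sum:
  assumes s: "s > 0" and n: "n > 0" and z: "\<bar>z\<bar> \<le> 1"
  shows "(\<Sum>l\<in>{..s}\<times>{..<n}\<times>UNIV. lit_prob n s z l * ((1 + a * litv \<psi> l) / 2))
       = (1 + a * mfun n s \<psi> z) / 2"
proof -
  define L where "L = layer s \<bar>z\<bar>"
  have L: "L \<le> s" unfolding L_def using layer_in(2)[OF s, of "\<bar>z\<bar>"] z by simp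
  define H where "H = (\<lambda>v neg. (1 / real n) *
      (if z < 0 then of_bool neg else if z > 0 then of_bool (\<not> neg) else 1 / 2) *
       ((1 + a * ((if neg then -1 else 1) * \<psi> (L, v))) / 2))"
  have "(\<Sum>l\<in>{..s}\<times>{..<n}\<times>UNIV. lit_prob n s z l * ((1 + a * litv \<psi> l) / 2))
      = (\<Sum>i\<le>s. if i = L then (\<Sum>v<n. H v True + H v False) else 0)"
    unfolding sum_lits
    by (intro sum.cong refl) (auto simp: lit_prob_def litv_def H_def L_def)
  also have "\<dots> = (\<Sum>v<n. H v True + H v False)"
    using L by simp
  also have "\<dots> = (\<Sum>v<n. (1 / real n) * ((1 + a * sgn z * \<psi> (L, v)) / 2))"
    by (intro sum.cong refl) (auto simp: H_def sgn_if field_simps)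
  also have "\<dots> = (1 + a * mfun n s \<psi> z) / 2"
    using n by (simp add: mfun_def mu_def L_def sum.distrib sum_distrib_left[symmetric]
        sum_divide_distrib[symmetric] field_simps)
  finally show ?thesis .
qed

lemma lit_sum1:
  assumes s: "s > 0" and n: "n > 0" and z: "\<bar>z\<bar> \<le> 1"
  shows "(\<Sum>l\<in>{..s}\<times>{..<n}\<times>UNIV. lit_prob n s z l) = 1"
  using lit_sum[OF assms, of 0] by (simp add: sum_divide_distrib[symmetric])

lemma lit_prob_meas[measurable]:
  assumes "s > 0"
  shows "(\<lambda>z. lit_prob n s z c) \<in> borel_measurable borel"
  unfolding lit_prob_def using assms by (cases c) simp

lemma mfun_meas[measurable]:
  assumes "s > 0"
  shows "mfun n s \<psi> \<in> borel_measurable borel"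
  unfolding mfun_def[abs_def] using assms by measurable


lemma cube_sq: "x \<in> cube k \<Longrightarrow> j < k \<Longrightarrow> x j * x j = 1"
  by (auto simp: cube_def PiE_def Pi_def)

lemma cube_prod_delta:
  assumes x: "x \<in> cube k" and y: "y \<in> cube k"
  shows "(\<Prod>j<k. (1 + x j * y j) / 2) = (if x = y then 1 else 0)"
proof (cases "x = y")
  case True
  then show ?thesis using cube_sq[OF y] by simp
next
  case False
  then obtain j where j: "x j \<noteq> y j" by auto
  have jk: "j < k"
  proof (rule ccontr)
    assume "\<not> j < k"
    then have "x j = undefined" "y j = undefined" using x y by (auto simp: cube_def PiE_def extensional_def)
    then show False using j by simp
  qed
  have "x j \<in> {-1, 1}" "y j \<in> {-1, 1}" using x y jk by (auto simp: cube_def)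
  then have "x j * y j = -1" using j by auto
  then have "(1 + x j * y j) / 2 = 0" by simp
  then have "(\<Prod>j<k. (1 + x j * y j) / 2) = 0" using jk by (intro prod_zero) auto
  then show ?thesis using False by simp
qed

lemma finite_cube: "finite (cube k)"
  unfolding cube_def by (intro finite_PiE) auto

lemma f_expand:
  assumes y: "y \<in> cube k"
  shows "of_bool (f y) = (\<Sum>x\<in>cube k. of_bool (f x) * (\<Prod>j<k. (1 + x j * y j) / 2) :: real)"
proof -
  have "(\<Sum>x\<in>cube k. of_bool (f x) * (\<Prod>j<k. (1 + x j * y j) / 2) :: real)
      = (\<Sum>x\<in>cube k. if x = y then of_bool (f x) else 0)"
    by (intro sum.cong refl) (simp add: cube_prod_delta y)
  also have "\<dots> = of_bool (f y)" using y finite_cube[of k] by (simp add: sum.delta')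
  finally show ?thesis by simp
qed

lemma prod_expand:
  fixes x m :: "nat \<Rightarrow> real"
  shows "(\<Prod>j<k. (1 + x j * m j) / 2) = (\<Sum>S\<in>Pow {..<k}. (\<Prod>j\<in>S. x j) * (\<Prod>j\<in>S. m j)) / 2 ^ k"
proof -
  have "(\<Prod>j<k. (1 + x j * m j) / 2) = (\<Prod>j<k. x j * m j + 1) / 2 ^ k"
    by (simp add: prod_dividef add.commute)
  also have "(\<Prod>j<k. x j * m j + 1) = (\<Sum>S\<in>Pow {..<k}. (\<Prod>j\<in>S. x j * m j) * (\<Prod>j\<in>{..<k} - S. 1))"
    by (rule prod_add) simp
  finally show ?thesis by (simp add: prod.distrib)
qed

lemma f_fourier:
  fixes m :: "nat \<Rightarrow> real"
  shows "(\<Sum>x\<in>cube k. of_bool (f x) * (\<Prod>j<k. (1 + x j * m j) / 2))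
       = (\<Sum>S\<in>Pow {..<k}. fhat k f S * (\<Prod>j\<in>S. m j))"
proof -
  have "(\<Sum>x\<in>cube k. of_bool (f x) * (\<Prod>j<k. (1 + x j * m j) / 2))
      = (\<Sum>x\<in>cube k. \<Sum>S\<in>Pow {..<k}. of_bool (f x) * (\<Prod>j\<in>S. x j) / 2 ^ k * (\<Prod>j\<in>S. m j))"
    by (simp add: prod_expand sum_distrib_left sum_divide_distrib mult.assoc)
  also have "\<dots> = (\<Sum>S\<in>Pow {..<k}. \<Sum>x\<in>cube k. of_bool (f x) * (\<Prod>j\<in>S. x j) / 2 ^ k * (\<Prod>j\<in>S. m j))"
    by (rule sum.swap)
  also have "\<dots> = (\<Sum>S\<in>Pow {..<k}. fhat k f S * (\<Prod>j\<in>S. m j))"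
    by (simp add: fhat_def sum_distrib_right sum_divide_distrib)
  finally show ?thesis .
qed

lemma pointwise:
  assumes s: "s > 0" and n: "n > 0" and z: "\<And>j. j < k \<Longrightarrow> \<bar>\<zeta> j\<bar> \<le> 1"
  shows "(\<Sum>c\<in>constraints k n s. (\<Prod>j<k. lit_prob n s (\<zeta> j) (c j)) * (\<Prod>j<k. (1 + x j * litv \<psi> (c j)) / 2))
       = (\<Prod>j<k. (1 + x j * mfun n s \<psi> (\<zeta> j)) / 2)"
proof -
  have "(\<Sum>c\<in>constraints k n s. (\<Prod>j<k. lit_prob n s (\<zeta> j) (c j)) * (\<Prod>j<k. (1 + x j * litv \<psi> (c j)) / 2))
      = (\<Sum>c\<in>constraints k n s. \<Prod>j<k. lit_prob n s (\<zeta> j) (c j) * ((1 + x j * litv \<psi> (c j)) / 2))"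
    by (simp add: prod.distrib[symmetric])
  also have "\<dots> = (\<Prod>j<k. \<Sum>l\<in>{..s}\<times>{..<n}\<times>UNIV. lit_prob n s (\<zeta> j) l * ((1 + x j * litv \<psi> l) / 2))"
    unfolding constraints_def by (rule prod_sum_PiE[symmetric]) auto
  also have "\<dots> = (\<Prod>j<k. (1 + x j * mfun n s \<psi> (\<zeta> j)) / 2)"
    by (intro prod.cong refl lit_sum[OF s n z]) auto
  finally show ?thesis .
qed

lemma pointwise1:
  assumes s: "s > 0" and n: "n > 0" and z: "\<And>j. j < k \<Longrightarrow> \<bar>\<zeta> j\<bar> \<le> 1"
  shows "(\<Sum>c\<in>constraints k n s. (\<Prod>j<k. lit_prob n s (\<zeta> j) (c j))) = 1"
proof -
  have "(\<Sum>c\<in>constraints k n s. (\<Prod>j<k. lit_prob n s (\<zeta> j) (c j)))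
      = (\<Prod>j<k. \<Sum>l\<in>{..s}\<times>{..<n}\<times>UNIV. lit_prob n s (\<zeta> j) l)"
    unfolding constraints_def by (rule prod_sum_PiE[symmetric]) auto
  also have "\<dots> = 1" by (intro prod.neutral ballI lit_sum1[OF s n z]) auto
  finally show ?thesis .
qed


lemma lit_prob_bounds:
  assumes "n > 0"
  shows "0 \<le> lit_prob n s z c" "lit_prob n s z c \<le> 1"
proof -
  obtain i v neg where c: "c = (i, v, neg)" by (cases c) auto
  define A where "A = (of_bool (i = layer s \<bar>z\<bar>) :: real)"
  define B where "B = (if v < n then 1 / real n else 0 :: real)"
  define C where "C = (if z < 0 then of_bool neg else if z > 0 then of_bool (\<not> neg) else 1 / 2 :: real)"
  have eq: "lit_prob n s z c = A * B * C" by (simp add: lit_prob_def c A_def B_def C_def)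
  have A: "0 \<le> A" "A \<le> 1" by (auto simp: A_def)
  have B: "0 \<le> B" "B \<le> 1" using assms by (auto simp: B_def)
  have C: "0 \<le> C" "C \<le> 1" by (auto simp: C_def)
  show "0 \<le> lit_prob n s z c" unfolding eq using A B C by simp
  show "lit_prob n s z c \<le> 1" unfolding eq using A B C by (intro mult_le_one) auto
qed

lemma mu_bound:
  assumes "\<forall>x. \<psi> x \<in> {-1, 1}" "n > 0"
  shows "\<bar>mu n \<psi> i\<bar> \<le> 1"
proof -
  have "\<bar>\<Sum>v<n. \<psi> (i, v)\<bar> \<le> (\<Sum>v<n. \<bar>\<psi> (i, v)\<bar>)" by (rule sum_abs)
  also have "\<dots> = (\<Sum>v<n. 1)"
  proof (intro sum.cong refl)
    fix v have "\<psi> (i, v) \<in> {-1, 1}" using assms(1) by blast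
    then show "\<bar>\<psi> (i, v)\<bar> = 1" by auto
  qed
  also have "\<dots> = real n" by simp
  finally have h: "\<bar>\<Sum>v<n. \<psi> (i, v)\<bar> \<le> real n" .
  have "\<bar>mu n \<psi> i\<bar> = \<bar>\<Sum>v<n. \<psi> (i, v)\<bar> / real n" unfolding mu_def by (simp add: abs_div_pos)
  also have "\<dots> \<le> 1" using h assms(2) by (simp add: divide_le_eq)
  finally show ?thesis .
qed

lemma mfun_bound:
  assumes "\<forall>x. \<psi> x \<in> {-1, 1}" "n > 0"
  shows "\<bar>mfun n s \<psi> z\<bar> \<le> 1"
proof -
  have "\<bar>mfun n s \<psi> z\<bar> = \<bar>sgn z\<bar> * \<bar>mu n \<psi> (layer s \<bar>z\<bar>)\<bar>" by (simp add: mfun_def abs_mult)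
  also have "\<dots> \<le> 1 * 1" using mu_bound[OF assms] by (intro mult_mono) (auto simp: sgn_if)
  finally show ?thesis by simp
qed

locale csp_setup = prob_space M for M :: "(nat \<Rightarrow> real) measure" +
  fixes k n s :: nat
  assumes sets_eq: "sets M = sets (PiM {..<k} (\<lambda>_. borel))"
    and bnd: "AE \<zeta> in M. \<forall>j<k. \<bar>\<zeta> j\<bar> \<le> 1"
    and s_pos: "s > 0" and n_pos: "n > 0"
begin

lemma comp_meas: "j < k \<Longrightarrow> (\<lambda>\<zeta>. \<zeta> j) \<in> borel_measurable M"
proof -
  assume j: "j < k"
  have h: "(\<lambda>x. x j) \<in> measurable (PiM {..<k} (\<lambda>_. borel)) borel"
    using j by (intro measurable_component_singleton) simp
  show ?thesis using h measurable_cong_sets[OF sets_eq refl, of borel] by blast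
qed

lemma g_meas: "(\<lambda>\<zeta>. \<Prod>j<k. lit_prob n s (\<zeta> j) (c j)) \<in> borel_measurable M"
  by (intro borel_measurable_prod measurable_compose[OF comp_meas lit_prob_meas[OF s_pos]]) auto

lemma g_int: "integrable M (\<lambda>\<zeta>. \<Prod>j<k. lit_prob n s (\<zeta> j) (c j))"
proof (rule integrable_const_bound[where B=1])
  show "AE x in M. norm (\<Prod>j<k. lit_prob n s (x j) (c j)) \<le> 1"
  proof (intro AE_I2)
    fix x :: "nat \<Rightarrow> real"
    have "norm (\<Prod>j<k. lit_prob n s (x j) (c j)) = (\<Prod>j<k. \<bar>lit_prob n s (x j) (c j)\<bar>)"
      by (simp add: abs_prod)
    also have "\<dots> \<le> 1"
      using lit_prob_bounds[OF n_pos] by (intro prod_le_1) auto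
    finally show "norm (\<Prod>j<k. lit_prob n s (x j) (c j)) \<le> 1" .
  qed
qed (rule g_meas)

lemma total_prob: "(\<Sum>c\<in>constraints k n s. constraint_prob k M n s c) = 1"
proof -
  have "(\<Sum>c\<in>constraints k n s. constraint_prob k M n s c)
      = (\<integral>\<zeta>. (\<Sum>c\<in>constraints k n s. \<Prod>j<k. lit_prob n s (\<zeta> j) (c j)) \<partial>M)"
    unfolding constraint_prob_def
    using Bochner_Integration.integral_sum[where M=M and I="constraints k n s" and f="\<lambda>c \<zeta>. \<Prod>j<k. lit_prob n s (\<zeta> j) (c j)"] g_int
    by simp
  also have "\<dots> = (\<integral>\<zeta>. 1 \<partial>M)"
    by (intro integral_cong_AE borel_measurable_sum g_meas)
       (auto intro!: eventually_mono[OF bnd] pointwise1[OF s_pos n_pos])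
  also have "\<dots> = 1" by (simp add: prob_space)
  finally show ?thesis .
qed

lemma cp_nonneg: "constraint_prob k M n s c \<ge> 0"
  unfolding constraint_prob_def
proof (intro integral_nonneg_AE AE_I2)
  fix x :: "nat \<Rightarrow> real"
  show "0 \<le> (\<Prod>j<k. lit_prob n s (x j) (c j))"
    using lit_prob_bounds(1)[OF n_pos] by (intro prod_nonneg) auto
qed

end


lemma swap_sums:
  fixes a :: "'s \<Rightarrow> 'p \<Rightarrow> 'b \<Rightarrow> real" and m :: "real \<Rightarrow> 's \<Rightarrow> 'p \<Rightarrow> 'b \<Rightarrow> real"
  assumes "finite V"
  shows "(\<Sum>v\<in>V. v * ((\<Sum>S\<in>A. (\<Sum>\<pi>\<in>B S. (\<Sum>b\<in>C S. a S \<pi> b * m v S \<pi> b) / x) / y S) / z))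
       = (\<Sum>S\<in>A. (\<Sum>\<pi>\<in>B S. (\<Sum>b\<in>C S. a S \<pi> b * (\<Sum>v\<in>V. v * m v S \<pi> b)) / x) / y S) / z"
proof -
  have "(\<Sum>v\<in>V. v * ((\<Sum>S\<in>A. (\<Sum>\<pi>\<in>B S. (\<Sum>b\<in>C S. a S \<pi> b * m v S \<pi> b) / x) / y S) / z))
      = (\<Sum>v\<in>V. \<Sum>S\<in>A. \<Sum>\<pi>\<in>B S. \<Sum>b\<in>C S. v * (a S \<pi> b * m v S \<pi> b) / x / y S / z)"
    by (simp add: sum_distrib_left sum_divide_distrib)
  also have "\<dots> = (\<Sum>S\<in>A. \<Sum>v\<in>V. \<Sum>\<pi>\<in>B S. \<Sum>b\<in>C S. v * (a S \<pi> b * m v S \<pi> b) / x / y S / z)"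
    by (rule sum.swap)
  also have "\<dots> = (\<Sum>S\<in>A. \<Sum>\<pi>\<in>B S. \<Sum>v\<in>V. \<Sum>b\<in>C S. v * (a S \<pi> b * m v S \<pi> b) / x / y S / z)"
    by (rule sum.cong[OF refl], rule sum.swap)
  also have "\<dots> = (\<Sum>S\<in>A. \<Sum>\<pi>\<in>B S. \<Sum>b\<in>C S. \<Sum>v\<in>V. v * (a S \<pi> b * m v S \<pi> b) / x / y S / z)"
    by (rule sum.cong[OF refl], rule sum.cong[OF refl], rule sum.swap)
  also have "\<dots> = (\<Sum>S\<in>A. (\<Sum>\<pi>\<in>B S. (\<Sum>b\<in>C S. a S \<pi> b * (\<Sum>v\<in>V. v * m v S \<pi> b)) / x) / y S) / z"
    by (simp add: sum_distrib_left sum_divide_distrib mult_ac)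
  finally show ?thesis .
qed

lemma mfun_odd:
  assumes "b \<in> {-1, 1}"
  shows "mfun n s \<psi> (b * z) = b * mfun n s \<psi> z"
  using assms by (auto simp: mfun_def sgn_mult)

lemma mfun_range:
  assumes "s > 0"
  shows "mfun n s \<psi> z \<in> (\<lambda>(\<sigma>, i). \<sigma> * mu n \<psi> i) ` ({-1, 0, 1} \<times> insert (THE i::nat. False) {..s})"
proof -
  have L: "layer s \<bar>z\<bar> \<in> insert (THE i::nat. False) {..s}"
    using layer_in(2)[OF assms, of "\<bar>z\<bar>"] layer_out[of "\<bar>z\<bar>" s] by (cases "\<bar>z\<bar> \<le> 1") auto
  have "sgn z \<in> {-1, 0, 1}" by (auto simp: sgn_if)
  then show ?thesis using L unfolding mfun_def by (intro image_eqI[where x="(sgn z, layer s \<bar>z\<bar>)"]) auto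
qed

lemma proj_F:
  assumes S: "finite S" "card S = t" and \<pi>: "\<pi> permutes S" and b: "b \<in> PiE S (\<lambda>_. {-1, 1})"
  shows "(\<Prod>i<t. mfun n s \<psi> (proj_vec S \<pi> b \<zeta> i)) = (\<Prod>x\<in>S. b x) * (\<Prod>j\<in>S. mfun n s \<psi> (\<zeta> j))"
proof -
  define sl where "sl = sorted_list_of_set S"
  have len: "length sl = t" using S by (simp add: sl_def)
  have bij: "bij_betw ((!) sl) {..<t} S"
    by (rule bij_betw_nth) (use S len in \<open>auto simp: sl_def\<close>)
  have "(\<Prod>i<t. mfun n s \<psi> (proj_vec S \<pi> b \<zeta> i)) = (\<Prod>i<t. mfun n s \<psi> (b (sl ! i) * \<zeta> (\<pi> (sl ! i))))"
    by (intro prod.cong refl) (simp add: proj_vec_def sl_def S Let_def)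
  also have "\<dots> = (\<Prod>x\<in>S. mfun n s \<psi> (b x * \<zeta> (\<pi> x)))"
    by (rule prod.reindex_bij_betw[OF bij])
  also have "\<dots> = (\<Prod>x\<in>S. b x * mfun n s \<psi> (\<zeta> (\<pi> x)))"
    using b by (intro prod.cong refl mfun_odd) auto
  also have "\<dots> = (\<Prod>x\<in>S. b x) * (\<Prod>x\<in>S. mfun n s \<psi> (\<zeta> (\<pi> x)))"
    by (rule prod.distrib)
  also have "(\<Prod>x\<in>S. mfun n s \<psi> (\<zeta> (\<pi> x))) = (\<Prod>j\<in>S. mfun n s \<psi> (\<zeta> j))"
    using prod.permute[OF \<pi>, of "\<lambda>j. mfun n s \<psi> (\<zeta> j)"] by (simp add: comp_def)
  finally show ?thesis .
qed

lemma prod_b_sq: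
  assumes "b \<in> PiE S (\<lambda>_. {-1, 1::real})"
  shows "(\<Prod>x\<in>S. b x) * (\<Prod>x\<in>S. b x) = 1"
proof -
  have "(\<Prod>x\<in>S. b x) * (\<Prod>x\<in>S. b x) = (\<Prod>x\<in>S. b x * b x)" by (simp add: prod.distrib)
  also have "\<dots> = 1"
  proof (intro prod.neutral ballI)
    fix x assume "x \<in> S"
    then have "b x \<in> {-1, 1}" using PiE_mem[OF assms] by blast
    then show "b x * b x = 1" by auto
  qed
  finally show ?thesis .
qed


context csp_setup
begin

lemma proj_meas:
  assumes S: "S \<subseteq> {..<k}" "card S = t" and \<pi>: "\<pi> permutes S"
  shows "proj_vec S \<pi> b \<in> measurable M (PiM {..<t} (\<lambda>_. borel))"
proof -
  have fin: "finite S" using S(1) finite_subset by blast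
  have "(\<lambda>\<zeta>. \<lambda>j\<in>{..<t}. let x = sorted_list_of_set S ! j in b x * \<zeta> (\<pi> x)) \<in> measurable M (PiM {..<t} (\<lambda>_. borel))"
  proof (rule measurable_restrict)
    fix j assume j: "j \<in> {..<t}"
    have "sorted_list_of_set S ! j \<in> S" 
    proof -
      have "j < length (sorted_list_of_set S)" using j fin S(2) by simp
      then have "sorted_list_of_set S ! j \<in> set (sorted_list_of_set S)" by (rule nth_mem)
      then show ?thesis using fin by simp
    qed
    then have "\<pi> (sorted_list_of_set S ! j) \<in> S" using \<pi> by (simp add: permutes_in_image)
    then have "\<pi> (sorted_list_of_set S ! j) < k" using S(1) by auto
    then show "(\<lambda>\<zeta>. let x = sorted_list_of_set S ! j in b x * \<zeta> (\<pi> x)) \<in> borel_measurable M"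
      unfolding Let_def by (intro borel_measurable_times borel_measurable_const comp_meas)
  qed
  then show ?thesis unfolding proj_vec_def[abs_def] using S(2) by simp
qed

lemma key_zero2:
  assumes psi: "\<forall>x. \<psi> x \<in> {-1, 1}"
    and cond: "\<forall>t\<in>{1..k}. \<forall>A\<in>sets (PiM {..<t} (\<lambda>_. borel)). signed_avg k f M t A = 0"
    and t: "t \<in> {1..k}"
  shows "(\<Sum>S\<in>{S. S \<subseteq> {..<k} \<and> card S = t}. fhat k f S * (\<integral>\<zeta>. (\<Prod>j\<in>S. mfun n s \<psi> (\<zeta> j)) \<partial>M)) = 0"
proof -
  define P where "P = PiM {..<t} (\<lambda>_. borel :: real measure)"
  define F where "F = (\<lambda>y::nat\<Rightarrow>real. \<Prod>i<t. mfun n s \<psi> (y i))"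
  define Rm where "Rm = (\<lambda>(\<sigma>, i). \<sigma> * mu n \<psi> i) ` ({-1, 0, 1::real} \<times> insert (THE i::nat. False) {..s})"
  define V where "V = (\<lambda>g. \<Prod>i<t. g i) ` PiE {..<t} (\<lambda>_. Rm)"
  define I where "I = (\<lambda>S. (\<integral>\<zeta>. (\<Prod>j\<in>S. mfun n s \<psi> (\<zeta> j)) \<partial>M))"
  define SS where "SS = {S. S \<subseteq> {..<k} \<and> card S = t}"
  have finV: "finite V" unfolding V_def Rm_def by (intro finite_imageI finite_PiE) auto
  have FV: "F y \<in> V" for y
  proof -
    have "restrict (\<lambda>i. mfun n s \<psi> (y i)) {..<t} \<in> PiE {..<t} (\<lambda>_. Rm)"
      using mfun_range[OF s_pos] by (auto simp: Rm_def)
    moreover have "F y = (\<Prod>i<t. restrict (\<lambda>i. mfun n s \<psi> (y i)) {..<t} i)"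
      unfolding F_def by (intro prod.cong refl) auto
    ultimately show ?thesis unfolding V_def by blast
  qed
  have F_meas: "F \<in> borel_measurable P"
    unfolding F_def P_def
  proof (intro borel_measurable_prod)
    fix i assume i: "i \<in> {..<t}"
    have "(\<lambda>y. y i) \<in> measurable (PiM {..<t} (\<lambda>_. borel :: real measure)) borel"
      using i by (intro measurable_component_singleton) simp
    then show "(\<lambda>y. mfun n s \<psi> (y i)) \<in> borel_measurable (PiM {..<t} (\<lambda>_. borel))"
      by (rule measurable_compose) (rule mfun_meas[OF s_pos])
  qed
  define A where "A = (\<lambda>v. F -` {v} \<inter> space P)"
  have A_sets: "A v \<in> sets P" for v unfolding A_def by (rule measurable_sets[OF F_meas]) simp
  have claim: "(\<Sum>v\<in>V. v * measure M {\<zeta> \<in> space M. proj_vec S \<pi> b \<zeta> \<in> A v}) = (\<Prod>x\<in>S. b x) * I S"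
    if S: "S \<in> SS" and \<pi>: "\<pi> permutes S" and b: "b \<in> PiE S (\<lambda>_. {-1, 1})" for S \<pi> b
  proof -
    have Sk: "S \<subseteq> {..<k}" and cS: "card S = t" using S by (auto simp: SS_def)
    have finS: "finite S" using Sk finite_subset by blast
    have pm: "proj_vec S \<pi> b \<in> measurable M P" unfolding P_def by (rule proj_meas[OF Sk cS \<pi>])
    define B where "B = (\<lambda>v. {\<zeta> \<in> space M. proj_vec S \<pi> b \<zeta> \<in> A v})"
    have B_sets: "B v \<in> sets M" for v
    proof -
      have "B v = proj_vec S \<pi> b -` A v \<inter> space M" by (auto simp: B_def)
      then show ?thesis using measurable_sets[OF pm A_sets] by simp
    qed
    have "(\<integral>\<zeta>. F (proj_vec S \<pi> b \<zeta>) \<partial>M) = (\<integral>\<zeta>. (\<Sum>v\<in>V. v * indicator (B v) \<zeta>) \<partial>M)"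
    proof (rule Bochner_Integration.integral_cong[OF refl])
      fix \<zeta> assume z: "\<zeta> \<in> space M"
      then have pz: "proj_vec S \<pi> b \<zeta> \<in> space P" using measurable_space[OF pm] by blast
      have "(\<Sum>v\<in>V. v * indicator (B v) \<zeta>) = (\<Sum>v\<in>V. if v = F (proj_vec S \<pi> b \<zeta>) then v else 0)"
        by (intro sum.cong refl) (auto simp: B_def A_def indicator_def z pz)
      also have "\<dots> = F (proj_vec S \<pi> b \<zeta>)" using finV FV by (simp add: sum.delta')
      finally show "F (proj_vec S \<pi> b \<zeta>) = (\<Sum>v\<in>V. v * indicator (B v) \<zeta>)" by simp
    qed
    also have "\<dots> = (\<Sum>v\<in>V. (\<integral>\<zeta>. v * indicator (B v) \<zeta> \<partial>M))"
      by (rule Bochner_Integration.integral_sum)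
         (intro integrable_mult_right integrable_real_indicator B_sets, simp add: less_top[symmetric])
    also have "\<dots> = (\<Sum>v\<in>V. v * measure M (B v))"
      using B_sets by (intro sum.cong refl) (simp add: Int_absorb2 sets.sets_into_space)
    finally have e1: "(\<Sum>v\<in>V. v * measure M (B v)) = (\<integral>\<zeta>. F (proj_vec S \<pi> b \<zeta>) \<partial>M)" by simp
    have "(\<integral>\<zeta>. F (proj_vec S \<pi> b \<zeta>) \<partial>M) = (\<integral>\<zeta>. (\<Prod>x\<in>S. b x) * (\<Prod>j\<in>S. mfun n s \<psi> (\<zeta> j)) \<partial>M)"
      unfolding F_def using proj_F[OF finS cS \<pi> b] by simp
    also have "\<dots> = (\<Prod>x\<in>S. b x) * I S" by (simp add: I_def)
    finally show ?thesis using e1 by (simp add: B_def)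
  qed
  have "0 = (\<Sum>v\<in>V. v * signed_avg k f M t (A v))" using cond t A_sets by (simp add: P_def)
  also have "\<dots> = (\<Sum>S\<in>SS. (\<Sum>\<pi>\<in>{\<pi>. \<pi> permutes S}. (\<Sum>b\<in>PiE S (\<lambda>_. {-1, 1}).
        (\<Prod>i\<in>S. b i) * fhat k f S * (\<Sum>v\<in>V. v * measure M {\<zeta> \<in> space M. proj_vec S \<pi> b \<zeta> \<in> A v})) / 2 ^ t)
        / fact t) / real (k choose t)"
    unfolding signed_avg_def SS_def by (rule swap_sums[OF finV])
  also have "\<dots> = (\<Sum>S\<in>SS. (\<Sum>\<pi>\<in>{\<pi>. \<pi> permutes S}. (\<Sum>b\<in>PiE S (\<lambda>_. {-1, 1::real}).
        fhat k f S * I S) / 2 ^ t) / fact t) / real (k choose t)"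
  proof -
    have "(\<Prod>i\<in>S. b i) * fhat k f S * (\<Sum>v\<in>V. v * measure M {\<zeta> \<in> space M. proj_vec S \<pi> b \<zeta> \<in> A v})
        = fhat k f S * I S"
      if "S \<in> SS" "\<pi> permutes S" "b \<in> PiE S (\<lambda>_. {-1, 1})" for S \<pi> b
    proof -
      have "(\<Prod>i\<in>S. b i) * fhat k f S * (\<Sum>v\<in>V. v * measure M {\<zeta> \<in> space M. proj_vec S \<pi> b \<zeta> \<in> A v})
          = ((\<Prod>i\<in>S. b i) * (\<Prod>i\<in>S. b i)) * fhat k f S * I S"
        using claim[OF that] by simp
      then show ?thesis using prod_b_sq[OF that(3)] by simp
    qed
    then show ?thesis by (intro sum.cong refl arg_cong2[where f="(/)"]) auto
  qed
  also have "\<dots> = (\<Sum>S\<in>SS. fhat k f S * I S) / real (k choose t)"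
  proof -
    have "(\<Sum>\<pi>\<in>{\<pi>. \<pi> permutes S}. (\<Sum>b\<in>PiE S (\<lambda>_. {-1, 1::real}). fhat k f S * I S) / 2 ^ t) / fact t
        = fhat k f S * I S" if "S \<in> SS" for S
    proof -
      have finS: "finite S" and cS: "card S = t" using that finite_subset[of S "{..<k}"] by (auto simp: SS_def)
      have c1: "card (PiE S (\<lambda>_. {-1, 1::real})) = 2 ^ t" using finS cS by (simp add: card_PiE numeral_2_eq_2)
      have c2: "card {\<pi>. \<pi> permutes S} = fact t" using card_permutations[OF cS finS] .
      show ?thesis by (simp add: c1 c2)
    qed
    then show ?thesis by (intro arg_cong2[where f="(/)"] sum.cong refl) auto
  qed
  finally have "(\<Sum>S\<in>SS. fhat k f S * I S) / real (k choose t) = 0" by simp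
  moreover have "real (k choose t) \<noteq> 0" using t by simp
  ultimately show ?thesis by (simp add: SS_def I_def)
qed

end


context csp_setup
begin

lemma mprod_meas: "S \<subseteq> {..<k} \<Longrightarrow> (\<lambda>\<zeta>. \<Prod>j\<in>S. mfun n s \<psi> (\<zeta> j)) \<in> borel_measurable M"
  by (intro borel_measurable_prod measurable_compose[OF comp_meas mfun_meas[OF s_pos]]) auto

lemma mprod_int:
  assumes "\<forall>x. \<psi> x \<in> {-1, 1}" "S \<subseteq> {..<k}"
  shows "integrable M (\<lambda>\<zeta>. \<Prod>j\<in>S. mfun n s \<psi> (\<zeta> j))"
proof (rule integrable_const_bound[where B=1])
  show "AE x in M. norm (\<Prod>j\<in>S. mfun n s \<psi> (x j)) \<le> 1"
  proof (intro AE_I2)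
    fix x
    have "norm (\<Prod>j\<in>S. mfun n s \<psi> (x j)) = (\<Prod>j\<in>S. \<bar>mfun n s \<psi> (x j)\<bar>)"
      by (simp add: abs_prod)
    also have "\<dots> \<le> 1" using mfun_bound[OF assms(1) n_pos] by (intro prod_le_1) auto
    finally show "norm (\<Prod>j\<in>S. mfun n s \<psi> (x j)) \<le> 1" .
  qed
qed (rule mprod_meas[OF assms(2)])

lemma key_zero:
  assumes psi: "\<forall>x. \<psi> x \<in> {-1, 1}"
    and cond: "\<forall>t\<in>{1..k}. \<forall>A\<in>sets (PiM {..<t} (\<lambda>_. borel)). signed_avg k f M t A = 0"
    and t: "t \<in> {1..k}"
  shows "(\<Sum>S\<in>{S. S \<subseteq> {..<k} \<and> card S = t}. fhat k f S * (\<integral>\<zeta>. (\<Prod>j\<in>S. mfun n s \<psi> (\<zeta> j)) \<partial>M)) = 0"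
  by (rule key_zero2[OF psi cond t])

lemma sum_by_card:
  fixes h :: "nat set \<Rightarrow> real"
  shows "(\<Sum>S\<in>Pow {..<k}. h S) = (\<Sum>t\<le>k. \<Sum>S\<in>{S. S \<subseteq> {..<k} \<and> card S = t}. h S)"
proof -
  have "(\<Sum>t\<le>k. \<Sum>S\<in>{S. S \<subseteq> {..<k} \<and> card S = t}. h S)
      = (\<Sum>t\<le>k. \<Sum>S\<in>Pow {..<k}. if card S = t then h S else 0)"
  proof (rule sum.cong[OF refl])
    fix t
    have e: "{S. S \<subseteq> {..<k} \<and> card S = t} = {S \<in> Pow {..<k}. card S = t}" by auto
    show "(\<Sum>S\<in>{S. S \<subseteq> {..<k} \<and> card S = t}. h S) = (\<Sum>S\<in>Pow {..<k}. if card S = t then h S else 0)"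
      unfolding e by (rule sum.inter_filter) simp
  qed
  also have "\<dots> = (\<Sum>S\<in>Pow {..<k}. \<Sum>t\<le>k. if card S = t then h S else 0)"
    by (rule sum.swap)
  also have "\<dots> = (\<Sum>S\<in>Pow {..<k}. h S)"
  proof (intro sum.cong refl)
    fix S assume "S \<in> Pow {..<k}"
    then have "card S \<le> k" using card_mono[of "{..<k}" S] by auto
    then show "(\<Sum>t\<le>k. if card S = t then h S else 0) = h S"
      by (simp add: sum.delta)
  qed
  finally show ?thesis by simp
qed

lemma expect_sat:
  assumes psi: "\<forall>x. \<psi> x \<in> {-1, 1}"
    and cond: "\<forall>t\<in>{1..k}. \<forall>A\<in>sets (PiM {..<t} (\<lambda>_. borel)). signed_avg k f M t A = 0"
  shows "(\<Sum>c\<in>constraints k n s. constraint_prob k M n s c * of_bool (satisfied k f \<psi> c)) = rho k f"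
proof -
  define P where "P = (\<lambda>x c. (\<Prod>j<k. (1 + x j * litv \<psi> (c j)) / 2))"
  define g where "g = (\<lambda>c \<zeta>. \<Prod>j<k. lit_prob n s (\<zeta> j) (c j))"
  define I where "I = (\<lambda>S. (\<integral>\<zeta>. (\<Prod>j\<in>S. mfun n s \<psi> (\<zeta> j)) \<partial>M))"
  have X: "of_bool (satisfied k f \<psi> c) = (\<Sum>x\<in>cube k. of_bool (f x) * P x c)"
    if c: "c \<in> constraints k n s" for c
  proof -
    define y where "y = (\<lambda>j\<in>{..<k}. litv \<psi> (c j))"
    have sat: "satisfied k f \<psi> c = f y" unfolding satisfied_def y_def litv_def by simp
    have lv: "litv \<psi> l \<in> {-1, 1}" for l
    proof -
      obtain i v neg where "l = (i, v, neg)" by (cases l) auto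
      moreover have "\<psi> (i, v) \<in> {-1, 1}" using psi by blast
      ultimately show ?thesis by (auto simp: litv_def)
    qed
    have y: "y \<in> cube k" unfolding y_def cube_def using lv by auto
    have "of_bool (f y) = (\<Sum>x\<in>cube k. of_bool (f x) * (\<Prod>j<k. (1 + x j * y j) / 2) :: real)"
      by (rule f_expand[OF y])
    also have "\<dots> = (\<Sum>x\<in>cube k. of_bool (f x) * P x c)"
      unfolding P_def y_def by (intro sum.cong refl arg_cong2[where f="(*)"] prod.cong) auto
    finally show ?thesis using sat by simp
  qed
  have "(\<Sum>c\<in>constraints k n s. constraint_prob k M n s c * of_bool (satisfied k f \<psi> c))
      = (\<Sum>c\<in>constraints k n s. (\<integral>\<zeta>. g c \<zeta> * (\<Sum>x\<in>cube k. of_bool (f x) * P x c) \<partial>M))"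
    by (intro sum.cong refl) (simp add: X constraint_prob_def g_def)
  also have "\<dots> = (\<integral>\<zeta>. (\<Sum>c\<in>constraints k n s. g c \<zeta> * (\<Sum>x\<in>cube k. of_bool (f x) * P x c)) \<partial>M)"
    using Bochner_Integration.integral_sum[where M=M and I="constraints k n s"
        and f="\<lambda>c \<zeta>. g c \<zeta> * (\<Sum>x\<in>cube k. of_bool (f x) * P x c)"] g_int
    by (simp add: g_def)
  also have "\<dots> = (\<integral>\<zeta>. (\<Sum>S\<in>Pow {..<k}. fhat k f S * (\<Prod>j\<in>S. mfun n s \<psi> (\<zeta> j))) \<partial>M)"
  proof (rule integral_cong_AE)
    show "(\<lambda>\<zeta>. \<Sum>c\<in>constraints k n s. g c \<zeta> * (\<Sum>x\<in>cube k. of_bool (f x) * P x c)) \<in> borel_measurable M"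
      unfolding g_def by (intro borel_measurable_sum borel_measurable_times g_meas) auto
    show "(\<lambda>\<zeta>. \<Sum>S\<in>Pow {..<k}. fhat k f S * (\<Prod>j\<in>S. mfun n s \<psi> (\<zeta> j))) \<in> borel_measurable M"
      by (intro borel_measurable_sum borel_measurable_times mprod_meas) auto
    show "AE \<zeta> in M. (\<Sum>c\<in>constraints k n s. g c \<zeta> * (\<Sum>x\<in>cube k. of_bool (f x) * P x c))
        = (\<Sum>S\<in>Pow {..<k}. fhat k f S * (\<Prod>j\<in>S. mfun n s \<psi> (\<zeta> j)))"
    proof (rule eventually_mono[OF bnd])
      fix \<zeta> :: "nat \<Rightarrow> real" assume z: "\<forall>j<k. \<bar>\<zeta> j\<bar> \<le> 1"
      have "(\<Sum>c\<in>constraints k n s. g c \<zeta> * (\<Sum>x\<in>cube k. of_bool (f x) * P x c))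
          = (\<Sum>x\<in>cube k. of_bool (f x) * (\<Sum>c\<in>constraints k n s. g c \<zeta> * P x c))"
        by (simp add: sum_distrib_left sum_distrib_right mult_ac) (rule sum.swap)
      also have "\<dots> = (\<Sum>x\<in>cube k. of_bool (f x) * (\<Prod>j<k. (1 + x j * mfun n s \<psi> (\<zeta> j)) / 2))"
        unfolding g_def P_def using pointwise[OF s_pos n_pos, where \<zeta>=\<zeta> and k=k] z by simp
      also have "\<dots> = (\<Sum>S\<in>Pow {..<k}. fhat k f S * (\<Prod>j\<in>S. mfun n s \<psi> (\<zeta> j)))"
        by (rule f_fourier)
      finally show "(\<Sum>c\<in>constraints k n s. g c \<zeta> * (\<Sum>x\<in>cube k. of_bool (f x) * P x c))
        = (\<Sum>S\<in>Pow {..<k}. fhat k f S * (\<Prod>j\<in>S. mfun n s \<psi> (\<zeta> j)))" .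
    qed
  qed
  also have "\<dots> = (\<Sum>S\<in>Pow {..<k}. fhat k f S * I S)"
    using Bochner_Integration.integral_sum[where M=M and I="Pow {..<k}"
        and f="\<lambda>S \<zeta>. fhat k f S * (\<Prod>j\<in>S. mfun n s \<psi> (\<zeta> j))"] mprod_int[OF psi]
    by (simp add: I_def)
  also have "\<dots> = (\<Sum>t\<le>k. \<Sum>S\<in>{S. S \<subseteq> {..<k} \<and> card S = t}. fhat k f S * I S)"
    by (rule sum_by_card)
  also have "\<dots> = (\<Sum>S\<in>{S. S \<subseteq> {..<k} \<and> card S = 0}. fhat k f S * I S)
      + (\<Sum>t\<in>{1..k}. \<Sum>S\<in>{S. S \<subseteq> {..<k} \<and> card S = t}. fhat k f S * I S)"
  proof -
    have "{..k} = insert 0 {1..k}" by auto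
    then show ?thesis by simp
  qed
  also have "(\<Sum>t\<in>{1..k}. \<Sum>S\<in>{S. S \<subseteq> {..<k} \<and> card S = t}. fhat k f S * I S) = 0"
    unfolding I_def using key_zero[OF psi cond] by (intro sum.neutral) auto
  also have "{S. S \<subseteq> {..<k} \<and> card S = 0} = {{}}"
    by (auto dest: finite_subset[OF _ finite_lessThan])
  finally have fin: "(\<Sum>c\<in>constraints k n s. constraint_prob k M n s c * of_bool (satisfied k f \<psi> c))
     = fhat k f {} * I {}" by simp
  have "I {} = 1" by (simp add: I_def prob_space)
  moreover have "fhat k f {} = rho k f"
    by (simp add: fhat_def rho_def sum.If_cases[symmetric] finite_cube Int_def)
  ultimately show ?thesis using fin by simp
qed

end


lemma sum_list_one_minus: "(\<Sum>c\<leftarrow>\<Phi>. 1 - g c) = real (length \<Phi>) - (\<Sum>c\<leftarrow>\<Phi>. (g c :: real))"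
  by (induction \<Phi>) auto

context csp_setup
begin

lemma good_prob:
  assumes cond: "\<forall>t\<in>{1..k}. \<forall>A\<in>sets (PiM {..<t} (\<lambda>_. borel)). signed_avg k f M t A = 0"
    and e: "e > 0" and m: "m > 0"
  shows "instance_prob k M n s m (\<lambda>\<Phi>. \<forall>\<psi> :: nat \<times> nat \<Rightarrow> real. (\<forall>x. \<psi> x \<in> {-1, 1}) \<longrightarrow>
           sat k f \<Phi> \<psi> \<in> {rho k f - e .. rho k f + e}) \<ge> 1 - 2 * 2 ^ ((s + 1) * n) * exp (- 2 * real m * e\<^sup>2)"
    "instance_prob k M n s m (\<lambda>\<Phi>. \<forall>\<psi> :: nat \<times> nat \<Rightarrow> real. (\<forall>x. \<psi> x \<in> {-1, 1}) \<longrightarrow>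
           sat k f \<Phi> \<psi> \<in> {rho k f - e .. rho k f + e}) \<le> 1"
proof -
  define D where "D = constraints k n s"
  define p where "p = constraint_prob k M n s"
  define R where "R = {..s} \<times> {..<n}"
  define L where "L = {\<Phi>. set \<Phi> \<subseteq> D \<and> length \<Phi> = m}"
  define good where "good = (\<lambda>\<Phi>. \<forall>\<psi> :: nat \<times> nat \<Rightarrow> real. (\<forall>x. \<psi> x \<in> {-1, 1}) \<longrightarrow>
           sat k f \<Phi> \<psi> \<in> {rho k f - e .. rho k f + e})"
  define Xf where "Xf = (\<lambda>\<psi> c. of_bool (satisfied k f \<psi> c) :: real)"
  define ext where "ext = (\<lambda>g::nat \<times> nat \<Rightarrow> real. \<lambda>x. if x \<in> R then g x else 1)"
  define Psi where "Psi = ext ` PiE R (\<lambda>_. {-1, 1})"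
  define up where "up = (\<lambda>\<psi> \<Phi>. (\<Sum>c\<leftarrow>\<Phi>. Xf \<psi> c) \<ge> real m * ((\<Sum>c\<in>D. p c * Xf \<psi> c) + e))"
  define low where "low = (\<lambda>\<psi> \<Phi>. (\<Sum>c\<leftarrow>\<Phi>. 1 - Xf \<psi> c) \<ge> real m * ((\<Sum>c\<in>D. p c * (1 - Xf \<psi> c)) + e))"
  have finD: "finite D" unfolding D_def constraints_def by (intro finite_PiE) auto
  have finL: "finite L" unfolding L_def using finite_lists_length_eq[OF finD] by simp
  have pnn: "\<And>c. p c \<ge> 0" unfolding p_def by (rule cp_nonneg)
  have p1: "(\<Sum>c\<in>D. p c) = 1" unfolding p_def D_def by (rule total_prob)
  have Xb: "\<And>\<psi> c. Xf \<psi> c \<in> {0..1}" "\<And>\<psi> c. 1 - Xf \<psi> c \<in> {0..1}" by (auto simp: Xf_def)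
  have finPsi: "finite Psi" unfolding Psi_def R_def by (intro finite_imageI finite_PiE) auto
  have cardPsi: "card Psi \<le> 2 ^ ((s + 1) * n)"
  proof -
    have "card Psi \<le> card (PiE R (\<lambda>_. {-1, 1::real}))" unfolding Psi_def by (rule card_image_le) (auto simp: R_def intro!: finite_PiE)
    also have "\<dots> = 2 ^ ((s + 1) * n)" by (simp add: card_PiE R_def card_cartesian_product numeral_2_eq_2)
    finally show ?thesis .
  qed
  have Psi_pm: "\<forall>x. \<psi> x \<in> {-1, 1}" if psi_in: "\<psi> \<in> Psi" for \<psi>
  proof
    fix x
    obtain g where g: "g \<in> PiE R (\<lambda>_. {-1, 1})" and pg: "\<psi> = ext g" using psi_in by (auto simp: Psi_def)
    show "\<psi> x \<in> {-1, 1}"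
    proof (cases "x \<in> R")
      case True then show ?thesis using PiE_mem[OF g True] by (simp add: pg ext_def)
    qed (simp add: pg ext_def)
  qed
  have tail_up: "(\<Sum>\<Phi>\<in>L. of_bool (up \<psi> \<Phi>) * (\<Prod>c\<leftarrow>\<Phi>. p c)) \<le> exp (- 2 * real m * e\<^sup>2)" for \<psi>
    unfolding L_def up_def by (rule tail_bound[OF finD pnn p1 Xb(1) e])
  have tail_low: "(\<Sum>\<Phi>\<in>L. of_bool (low \<psi> \<Phi>) * (\<Prod>c\<leftarrow>\<Phi>. p c)) \<le> exp (- 2 * real m * e\<^sup>2)" for \<psi>
    unfolding L_def low_def by (rule tail_bound[OF finD pnn p1 Xb(2) e])
  have pprod: "(\<Prod>c\<leftarrow>\<Phi>. p c) \<ge> 0" for \<Phi> using pnn by (intro prod_list_nonneg) auto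
  have sum1: "(\<Sum>\<Phi>\<in>L. \<Prod>c\<leftarrow>\<Phi>. p c) = 1" unfolding L_def using sum_lists_prod[OF finD] p1 by simp
  have pw: "(of_bool (\<not> good \<Phi>) :: real) \<le> (\<Sum>\<psi>\<in>Psi. of_bool (up \<psi> \<Phi>) + of_bool (low \<psi> \<Phi>))" if \<Phi>: "\<Phi> \<in> L" for \<Phi>
  proof (cases "good \<Phi>")
    case True
    have "(0::real) \<le> (\<Sum>\<psi>\<in>Psi. of_bool (up \<psi> \<Phi>) + of_bool (low \<psi> \<Phi>))"
      by (intro sum_nonneg add_nonneg_nonneg) auto
    then show ?thesis using True by simp
  next
    case False
    then obtain \<psi> :: "nat \<times> nat \<Rightarrow> real" where psi: "\<forall>x. \<psi> x \<in> {-1, 1}"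
      and nsat: "sat k f \<Phi> \<psi> \<notin> {rho k f - e .. rho k f + e}" unfolding good_def by blast
    define \<psi>' where "\<psi>' = ext (restrict \<psi> R)"
    have psi'_in: "\<psi>' \<in> Psi" unfolding Psi_def \<psi>'_def by (intro imageI) (rule restrict_PiE_iff[THEN iffD2], use psi in blast)
    have sat_eq: "satisfied k f \<psi>' c = satisfied k f \<psi> c" if "c \<in> D" for c
    proof -
      have "(\<lambda>j\<in>{..<k}. case c j of (i, v, neg) \<Rightarrow> (if neg then -1 else 1) * \<psi>' (i, v))
          = (\<lambda>j\<in>{..<k}. case c j of (i, v, neg) \<Rightarrow> (if neg then -1 else 1) * \<psi> (i, v))"
      proof (rule restrict_ext)
        fix j assume "j \<in> {..<k}"
        then have "c j \<in> {..s} \<times> {..<n} \<times> UNIV" using that by (auto simp: D_def constraints_def)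
        then show "(case c j of (i, v, neg) \<Rightarrow> (if neg then -1 else 1) * \<psi>' (i, v))
          = (case c j of (i, v, neg) \<Rightarrow> (if neg then -1 else 1) * \<psi> (i, v))"
          by (auto simp: \<psi>'_def ext_def R_def split: prod.splits)
      qed
      then show ?thesis unfolding satisfied_def by simp
    qed
    have lenm: "length \<Phi> = m" and setD: "set \<Phi> \<subseteq> D" using \<Phi> by (auto simp: L_def)
    have sumeq: "(\<Sum>c\<leftarrow>\<Phi>. Xf \<psi>' c) = (\<Sum>c\<leftarrow>\<Phi>. Xf \<psi> c)"
      using setD sat_eq by (intro arg_cong[where f=sum_list] map_cong) (auto simp: Xf_def)
    have satv: "sat k f \<Phi> \<psi> = (\<Sum>c\<leftarrow>\<Phi>. Xf \<psi>' c) / real m"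
    proof -
      have "sat k f \<Phi> \<psi> = (\<Sum>c\<leftarrow>\<Phi>. Xf \<psi> c) / real m" by (simp add: sat_def lenm Xf_def)
      then show ?thesis by (simp only: sumeq)
    qed
    have mX: "(\<Sum>c\<in>D. p c * Xf \<psi>' c) = rho k f"
      unfolding p_def D_def Xf_def by (rule expect_sat[OF Psi_pm[OF psi'_in] cond])
    have mY: "(\<Sum>c\<in>D. p c * (1 - Xf \<psi>' c)) = 1 - rho k f"
      using mX p1 by (simp add: right_diff_distrib sum_subtractf)
    have mpos: "real m > 0" using m by simp
    have "up \<psi>' \<Phi> \<or> low \<psi>' \<Phi>"
    proof (cases "sat k f \<Phi> \<psi> > rho k f + e")
      case True
      then have "(\<Sum>c\<leftarrow>\<Phi>. Xf \<psi>' c) > real m * (rho k f + e)"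
        using mpos by (simp add: satv pos_less_divide_eq mult.commute)
      then show ?thesis unfolding up_def mX by simp
    next
      case False
      then have "sat k f \<Phi> \<psi> < rho k f - e" using nsat by auto
      then have "(\<Sum>c\<leftarrow>\<Phi>. Xf \<psi>' c) < real m * (rho k f - e)"
        using mpos by (simp add: satv pos_divide_less_eq mult.commute)
      then have "(\<Sum>c\<leftarrow>\<Phi>. 1 - Xf \<psi>' c) \<ge> real m * ((1 - rho k f) + e)"
        by (simp add: sum_list_one_minus lenm algebra_simps)
      then show ?thesis unfolding low_def mY by simp
    qed
    then have "1 \<le> of_bool (up \<psi>' \<Phi>) + (of_bool (low \<psi>' \<Phi>) :: real)" by auto
    also have "\<dots> \<le> (\<Sum>\<psi>\<in>Psi. of_bool (up \<psi> \<Phi>) + of_bool (low \<psi> \<Phi>))"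
      by (rule member_le_sum[OF psi'_in _ finPsi]) auto
    finally show ?thesis using False by simp
  qed
  have ig: "instance_prob k M n s m good = (\<Sum>\<Phi>\<in>L. of_bool (good \<Phi>) * (\<Prod>c\<leftarrow>\<Phi>. p c))"
    by (simp add: instance_prob_def L_def D_def p_def)
  have "(\<Sum>\<Phi>\<in>L. of_bool (good \<Phi>) * (\<Prod>c\<leftarrow>\<Phi>. p c))
      = (\<Sum>\<Phi>\<in>L. \<Prod>c\<leftarrow>\<Phi>. p c) - (\<Sum>\<Phi>\<in>L. of_bool (\<not> good \<Phi>) * (\<Prod>c\<leftarrow>\<Phi>. p c))"
    by (simp add: sum_subtractf[symmetric]) (intro sum.cong refl, simp)
  also have "\<dots> = 1 - (\<Sum>\<Phi>\<in>L. of_bool (\<not> good \<Phi>) * (\<Prod>c\<leftarrow>\<Phi>. p c))" by (simp add: sum1)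
  finally have ig2: "instance_prob k M n s m good = 1 - (\<Sum>\<Phi>\<in>L. of_bool (\<not> good \<Phi>) * (\<Prod>c\<leftarrow>\<Phi>. p c))"
    using ig by simp
  have "(\<Sum>\<Phi>\<in>L. of_bool (\<not> good \<Phi>) * (\<Prod>c\<leftarrow>\<Phi>. p c))
      \<le> (\<Sum>\<Phi>\<in>L. (\<Sum>\<psi>\<in>Psi. of_bool (up \<psi> \<Phi>) + of_bool (low \<psi> \<Phi>)) * (\<Prod>c\<leftarrow>\<Phi>. p c))"
    by (intro sum_mono mult_right_mono pw pprod)
  also have "\<dots> = (\<Sum>\<psi>\<in>Psi. (\<Sum>\<Phi>\<in>L. of_bool (up \<psi> \<Phi>) * (\<Prod>c\<leftarrow>\<Phi>. p c))
        + (\<Sum>\<Phi>\<in>L. of_bool (low \<psi> \<Phi>) * (\<Prod>c\<leftarrow>\<Phi>. p c)))"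
    by (simp add: sum_distrib_right distrib_right sum.distrib) (simp add: sum.swap[of _ L])
  also have "\<dots> \<le> (\<Sum>\<psi>\<in>Psi. 2 * exp (- 2 * real m * e\<^sup>2))"
  proof (rule sum_mono)
    fix \<psi>
    show "(\<Sum>\<Phi>\<in>L. of_bool (up \<psi> \<Phi>) * (\<Prod>c\<leftarrow>\<Phi>. p c)) + (\<Sum>\<Phi>\<in>L. of_bool (low \<psi> \<Phi>) * (\<Prod>c\<leftarrow>\<Phi>. p c))
        \<le> 2 * exp (- 2 * real m * e\<^sup>2)"
      using add_mono[OF tail_up[of \<psi>] tail_low[of \<psi>]] by simp
  qed
  also have "\<dots> = real (card Psi) * (2 * exp (- 2 * real m * e\<^sup>2))" by simp
  also have "\<dots> \<le> 2 ^ ((s + 1) * n) * (2 * exp (- 2 * real m * e\<^sup>2))"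
  proof (rule mult_right_mono)
    show "real (card Psi) \<le> 2 ^ ((s + 1) * n)" using cardPsi by (metis of_nat_le_iff of_nat_numeral of_nat_power)
  qed simp
  finally have bad: "(\<Sum>\<Phi>\<in>L. of_bool (\<not> good \<Phi>) * (\<Prod>c\<leftarrow>\<Phi>. p c)) \<le> 2 * 2 ^ ((s + 1) * n) * exp (- 2 * real m * e\<^sup>2)"
    by simp
  have bad0: "(\<Sum>\<Phi>\<in>L. of_bool (\<not> good \<Phi>) * (\<Prod>c\<leftarrow>\<Phi>. p c)) \<ge> 0"
    by (intro sum_nonneg mult_nonneg_nonneg pprod) auto
  show "instance_prob k M n s m (\<lambda>\<Phi>. \<forall>\<psi> :: nat \<times> nat \<Rightarrow> real. (\<forall>x. \<psi> x \<in> {-1, 1}) \<longrightarrow>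
           sat k f \<Phi> \<psi> \<in> {rho k f - e .. rho k f + e}) \<ge> 1 - 2 * 2 ^ ((s + 1) * n) * exp (- 2 * real m * e\<^sup>2)"
    using ig2 bad unfolding good_def by simp
  show "instance_prob k M n s m (\<lambda>\<Phi>. \<forall>\<psi> :: nat \<times> nat \<Rightarrow> real. (\<forall>x. \<psi> x \<in> {-1, 1}) \<longrightarrow>
           sat k f \<Phi> \<psi> \<in> {rho k f - e .. rho k f + e}) \<le> 1"
    using ig2 bad0 unfolding good_def by simp
qed

end


lemma cstar_bound:
  assumes z: "\<zeta> \<in> Cstar_delta k f \<delta>" and d: "0 < \<delta>" "\<delta> < 1"
  shows "\<forall>j<k. \<bar>\<zeta> j\<bar> \<le> 1"
proof (intro allI impI)
  fix j assume j: "j < k"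
  obtain \<zeta>' where z': "\<zeta>' \<in> Cstar k f" and zeq: "\<zeta> = (\<lambda>j\<in>{..<k}. (1 - \<delta>) * \<zeta>' j)"
    using z unfolding Cstar_delta_def by blast
  obtain \<nu> :: "(nat \<Rightarrow> real) pmf" where sup: "set_pmf \<nu> \<subseteq> {x \<in> cube k. f x}"
    and ex: "\<zeta>' j = measure_pmf.expectation \<nu> (\<lambda>x. x j)"
    using z' j unfolding Cstar_def by blast
  have fin: "finite (set_pmf \<nu>)"
    by (rule finite_subset[OF sup]) (rule finite_subset[OF _ finite_cube[of k]], blast)
  have "\<zeta>' j = (\<Sum>a\<in>set_pmf \<nu>. a j * pmf \<nu> a)"
    unfolding ex by (rule integral_measure_pmf_real[OF fin]) simp
  then have "\<bar>\<zeta>' j\<bar> \<le> (\<Sum>a\<in>set_pmf \<nu>. \<bar>a j * pmf \<nu> a\<bar>)" by (simp add: sum_abs)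
  also have "\<dots> = (\<Sum>a\<in>set_pmf \<nu>. pmf \<nu> a)"
  proof (intro sum.cong refl)
    fix a assume "a \<in> set_pmf \<nu>"
    then have "a \<in> cube k" using sup by auto
    then have "a j \<in> {-1, 1}" using j by (auto simp: cube_def)
    then show "\<bar>a j * pmf \<nu> a\<bar> = pmf \<nu> a" by (auto simp: abs_mult)
  qed
  also have "\<dots> = 1" by (rule sum_pmf_eq_1[OF fin]) simp
  finally have "\<bar>\<zeta>' j\<bar> \<le> 1" .
  then have "\<bar>(1 - \<delta>) * \<zeta>' j\<bar> \<le> 1 * 1" using d unfolding abs_mult by (intro mult_mono) auto
  then show "\<bar>\<zeta> j\<bar> \<le> 1" using j zeq by simp
qed

theorem mainTheorem11:
  fixes k :: nat and f :: "(nat \<Rightarrow> real) \<Rightarrow> bool" and \<delta> :: real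
    and \<Lambda> :: "(nat \<Rightarrow> real) measure"
  assumes "0 < \<delta>" and "\<delta> < 1"
    and "prob_space \<Lambda>"
    and "sets \<Lambda> = sets (PiM {..<k} (\<lambda>_. borel))"
    and "AE \<zeta> in \<Lambda>. \<zeta> \<in> Cstar_delta k f \<delta>"
    and "\<forall>t\<in>{1..k}. \<forall>A\<in>sets (PiM {..<t} (\<lambda>_. borel)). signed_avg k f \<Lambda> t A = 0"
  shows "\<forall>\<epsilon>>0. \<exists>\<Delta>::nat. \<Delta> > 0 \<and>
     (\<lambda>n. instance_prob k \<Lambda> n (nat \<lceil>1 / \<epsilon>\<rceil>) (\<Delta> * n)
        (\<lambda>\<Phi>. \<forall>\<psi> :: nat \<times> nat \<Rightarrow> real. (\<forall>x. \<psi> x \<in> {-1, 1}) \<longrightarrow>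
           sat k f \<Phi> \<psi> \<in> {rho k f - \<epsilon> .. rho k f + \<epsilon>}))
     \<longlonglongrightarrow> 1"
proof (intro allI impI)
  fix \<epsilon> :: real assume e: "\<epsilon> > 0"
  define s where "s = nat \<lceil>1 / \<epsilon>\<rceil>"
  have s: "s > 0" using e by (simp add: s_def)
  define \<Delta> where "\<Delta> = nat \<lceil>((real s + 1) * ln 2 + 1) / (2 * \<epsilon>\<^sup>2)\<rceil> + 1"
  have \<Delta>: "\<Delta> > 0" by (simp add: \<Delta>_def)
  have e2: "2 * \<epsilon>\<^sup>2 > 0" using e by simp
  have "((real s + 1) * ln 2 + 1) / (2 * \<epsilon>\<^sup>2) \<le> real \<Delta>" unfolding \<Delta>_def by linarith
  then have \<Delta>b: "(real s + 1) * ln 2 + 1 \<le> 2 * real \<Delta> * \<epsilon>\<^sup>2"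
    using e2 by (simp add: pos_divide_le_eq mult_ac)
  have AEb: "AE \<zeta> in \<Lambda>. \<forall>j<k. \<bar>\<zeta> j\<bar> \<le> 1"
    using assms(5) by (rule eventually_mono) (rule cstar_bound[OF _ assms(1,2)])
  define Q where "Q = (\<lambda>n. instance_prob k \<Lambda> n (nat \<lceil>1 / \<epsilon>\<rceil>) (\<Delta> * n)
        (\<lambda>\<Phi>. \<forall>\<psi> :: nat \<times> nat \<Rightarrow> real. (\<forall>x. \<psi> x \<in> {-1, 1}) \<longrightarrow>
           sat k f \<Phi> \<psi> \<in> {rho k f - \<epsilon> .. rho k f + \<epsilon>}))"
  have bounds: "1 - 2 * exp (- real n) \<le> Q n \<and> Q n \<le> 1" if n: "n > 0" for n
  proof -
    interpret csp_setup \<Lambda> k n s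
      by (rule csp_setup.intro[OF assms(3)], unfold_locales) (use assms(4) AEb s n in auto)
    have m: "\<Delta> * n > 0" using \<Delta> n by simp
    note gp = good_prob[OF assms(6) e m]
    have "2 * 2 ^ ((s + 1) * n) * exp (- 2 * real (\<Delta> * n) * \<epsilon>\<^sup>2) \<le> 2 * exp (- real n)"
    proof -
      have "exp (real ((s + 1) * n) * ln 2) = exp (ln 2) ^ ((s + 1) * n)" by (rule exp_of_nat_mult)
      then have p2: "(2::real) ^ ((s + 1) * n) = exp (real ((s + 1) * n) * ln 2)" by simp
      have "2 ^ ((s + 1) * n) * exp (- 2 * real (\<Delta> * n) * \<epsilon>\<^sup>2)
          = exp (real n * ((real s + 1) * ln 2 - 2 * real \<Delta> * \<epsilon>\<^sup>2))"
        unfolding p2 mult_exp_exp by (rule arg_cong[where f=exp]) (simp add: algebra_simps)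
      also have "\<dots> \<le> exp (- real n)"
      proof -
        have "real n * ((real s + 1) * ln 2 - 2 * real \<Delta> * \<epsilon>\<^sup>2) \<le> real n * (-1)"
          using \<Delta>b by (intro mult_left_mono) auto
        then show ?thesis by simp
      qed
      finally show ?thesis by simp
    qed
    then show ?thesis using gp unfolding Q_def s_def by auto
  qed
  have ex: "exp (- real n) = exp (-1) ^ n" for n
    by (simp add: exp_of_nat_mult[symmetric])
  have e1: "exp (-1::real) < 1" using exp_less_cancel_iff[of "-1::real" 0] by simp
  have n1: "norm (exp (-1::real)) < 1" using e1 by (simp only: real_norm_def abs_of_pos[OF exp_gt_zero])
  have "(\<lambda>n. exp (-1::real) ^ n) \<longlonglongrightarrow> 0" by (rule LIMSEQ_power_zero[OF n1])
  then have "(\<lambda>n. 1 - 2 * exp (-1::real) ^ n) \<longlonglongrightarrow> 1 - 2 * 0"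
    by (rule tendsto_diff[OF tendsto_const tendsto_mult[OF tendsto_const]])
  then have lim: "(\<lambda>n. 1 - 2 * exp (- real n)) \<longlonglongrightarrow> 1" by (simp add: ex)
  have "Q \<longlonglongrightarrow> 1"
  proof (rule tendsto_sandwich[OF _ _ lim tendsto_const])
    show "\<forall>\<^sub>F n in sequentially. 1 - 2 * exp (- real n) \<le> Q n"
      using bounds by (intro eventually_sequentiallyI[of 1]) auto
    show "\<forall>\<^sub>F n in sequentially. Q n \<le> 1"
      using bounds by (intro eventually_sequentiallyI[of 1]) auto
  qed
  then show "\<exists>\<Delta>::nat. \<Delta> > 0 \<and>
     (\<lambda>n. instance_prob k \<Lambda> n (nat \<lceil>1 / \<epsilon>\<rceil>) (\<Delta> * n)
        (\<lambda>\<Phi>. \<forall>\<psi> :: nat \<times> nat \<Rightarrow> real. (\<forall>x. \<psi> x \<in> {-1, 1}) \<longrightarrow>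
           sat k f \<Phi> \<psi> \<in> {rho k f - \<epsilon> .. rho k f + \<epsilon>})) \<longlonglongrightarrow> 1"
    using \<Delta> unfolding Q_def by blast
qed


end
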